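(* Let $I$ be a stable matching instance with $k$-range preferences and $n$ men and $n$ women, and let $G(I)$ be the rotation digraph of $I$. Suppose $(\rho, \sigma)$ is a directed edge in $G(I)$. Then there exists $i \in [n]$ such that $i \in \mathrm{ext}(\rho) \cap \mathrm{ext}(\sigma)$.
   Context: An SM instance $I$ has men and women with complete strict preference lists; $P_a(b)$ is the rank $a$ assigns $b$. For an agent $a$, $\min\mathrm{rank}(a)$ and $\max\mathrm{rank}(a)$ are the minimum and maximum of $P_b(a)$ over agents $b$ of the opposite sex; $I$ has $k$-range preferences if $\max\mathrm{rank}(a) - \min\mathrm{rank}(a) \leq k-1$ for all $a$. A rotation is a circular list $(m_1,w_1),\ldots,(m_\ell,w_\ell)$ of pairs of some stable matching $\mu$ such that $w_{i+1}$ is the first woman after $w_i$ on $m_i$'s list who prefers $m_i$ to her partner $m_{i+1}$ in $\mu$; eliminating it matches $m_i$ to $w_{i+1}$ ("moves $m_i$ down to $w_{i+1}$", moving $m_i$ below any woman strictly between $w_i,w_{i+1}$ on his list; it moves $w_i$ up to $m_{i-1}$, above any man strictly between). The rotation digraph $G(I)$ (computed by Gusfield's algorithm) is a DAG on the rotations whose transitive closure is the rotation poset, with an edge $(\rho',\rho)$ exactly when (Rule 1) $(m,w)$ is in $\rho$ and $\rho'$ is the rotation that moves $m$ to $w$, or (Rule 2) $(m,w)$ is not in $\rho$, $\rho'\ne\rho$ is the rotation moving $w$ above $m$ and $\rho$ is the rotation moving $m$ below $w$. For a rotation $\rho$, $\mathrm{ext}(\rho) = [\min\mathrm{rank}_{\min}(\rho)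 - 2k+1, \min\mathrm{rank}_{\max}(\rho) + 2k-1]$, where $\min\mathrm{rank}_{\min}(\rho)$ and $\min\mathrm{rank}_{\max}(\rho)$ are the minimum and maximum of $\min\mathrm{rank}(a)$ over agents $a$ appearing in $\rho$. *)

theory Defs
  imports Main
begin

(* Conventions: men and women are both indexed by {0..<n} (nat).
   pm m w = rank man m assigns woman w; pw w m = rank woman w assigns man m.
   Ranks are 1..n, smaller rank = more preferred. *)

definition pref_complete :: "nat \<Rightarrow> (nat \<Rightarrow> nat \<Rightarrow> nat) \<Rightarrow> bool" where
  "pref_complete n p \<longleftrightarrow> (\<forall>a<n. bij_betw (p a) {..<n} {1..n})"

definition sm_instance :: "nat \<Rightarrow> (nat \<Rightarrow> nat \<Rightarrow> nat) \<Rightarrow> (nat \<Rightarrow> nat \<Rightarrow> nat) \<Rightarrow> bool" where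
  "sm_instance n pm pw \<longleftrightarrow> pref_complete n pm \<and> pref_complete n pw"

definition minrank_man :: "nat \<Rightarrow> (nat \<Rightarrow> nat \<Rightarrow> nat) \<Rightarrow> nat \<Rightarrow> nat" where
  "minrank_man n pw m = Min ((\<lambda>w. pw w m) ` {..<n})"
definition maxrank_man :: "nat \<Rightarrow> (nat \<Rightarrow> nat \<Rightarrow> nat) \<Rightarrow> nat \<Rightarrow> nat" where
  "maxrank_man n pw m = Max ((\<lambda>w. pw w m) ` {..<n})"
definition minrank_woman :: "nat \<Rightarrow> (nat \<Rightarrow> nat \<Rightarrow> nat) \<Rightarrow> nat \<Rightarrow> nat" where
  "minrank_woman n pm w = Min ((\<lambda>m. pm m w) ` {..<n})"
definition maxrank_woman :: "nat \<Rightarrow> (nat \<Rightarrow> nat \<Rightarrow> nat) \<Rightarrow> nat \<Rightarrow> nat" where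
  "maxrank_woman n pm w = Max ((\<lambda>m. pm m w) ` {..<n})"

definition k_range :: "nat \<Rightarrow> (nat \<Rightarrow> nat \<Rightarrow> nat) \<Rightarrow> (nat \<Rightarrow> nat \<Rightarrow> nat) \<Rightarrow> nat \<Rightarrow> bool" where
  "k_range n pm pw k \<longleftrightarrow>
     (\<forall>m<n. int (maxrank_man n pw m) - int (minrank_man n pw m) \<le> int k - 1) \<and>
     (\<forall>w<n. int (maxrank_woman n pm w) - int (minrank_woman n pm w) \<le> int k - 1)"

definition is_matching :: "nat \<Rightarrow> (nat \<Rightarrow> nat) \<Rightarrow> bool" where
  "is_matching n mu \<longleftrightarrow> bij_betw mu {..<n} {..<n}"

definition prefers_to_partner :: "nat \<Rightarrow> (nat \<Rightarrow> nat \<Rightarrow> nat) \<Rightarrow> (nat \<Rightarrow> nat) \<Rightarrow> nat \<Rightarrow> nat \<Rightarrow> bool" where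
  "prefers_to_partner n pw mu w m \<longleftrightarrow> (\<forall>m'<n. mu m' = w \<longrightarrow> pw w m < pw w m')"

definition stable :: "nat \<Rightarrow> (nat \<Rightarrow> nat \<Rightarrow> nat) \<Rightarrow> (nat \<Rightarrow> nat \<Rightarrow> nat) \<Rightarrow> (nat \<Rightarrow> nat) \<Rightarrow> bool" where
  "stable n pm pw mu \<longleftrightarrow> is_matching n mu \<and>
     \<not> (\<exists>m<n. \<exists>w<n. pm m w < pm m (mu m) \<and> prefers_to_partner n pw mu w m)"

(* rho = [(m_0,w_0),...,(m_{l-1},w_{l-1})], indices taken cyclically *)
definition nxt :: "'a list \<Rightarrow> nat \<Rightarrow> 'a" where
  "nxt xs i = xs ! ((i + 1) mod length xs)"
definition prv :: "'a list \<Rightarrow> nat \<Rightarrow> 'a" where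
  "prv xs i = xs ! ((i + length xs - 1) mod length xs)"

definition is_rotation_of :: "nat \<Rightarrow> (nat \<Rightarrow> nat \<Rightarrow> nat) \<Rightarrow> (nat \<Rightarrow> nat \<Rightarrow> nat) \<Rightarrow> (nat \<Rightarrow> nat)
    \<Rightarrow> (nat \<times> nat) list \<Rightarrow> bool" where
  "is_rotation_of n pm pw mu rho \<longleftrightarrow> stable n pm pw mu \<and> rho \<noteq> [] \<and> distinct rho \<and>
     (\<forall>i<length rho.
        let mi = fst (rho ! i); wi = snd (rho ! i);
            mj = fst (nxt rho i); wj = snd (nxt rho i)
        in mi < n \<and> wi < n \<and> mu mi = wi \<and>
           pm mi wi < pm mi wj \<and> pw wj mi < pw wj mj \<and>
           (\<forall>w<n. pm mi wi < pm mi w \<and> pm mi w < pm mi wj \<longrightarrow>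
                   \<not> prefers_to_partner n pw mu w mi))"

definition is_rotation :: "nat \<Rightarrow> (nat \<Rightarrow> nat \<Rightarrow> nat) \<Rightarrow> (nat \<Rightarrow> nat \<Rightarrow> nat) \<Rightarrow> (nat \<times> nat) list \<Rightarrow> bool" where
  "is_rotation n pm pw rho \<longleftrightarrow> (\<exists>mu. is_rotation_of n pm pw mu rho)"

(* eliminating rho moves m_i to w_{i+1} *)
definition moves_to :: "(nat \<times> nat) list \<Rightarrow> nat \<Rightarrow> nat \<Rightarrow> bool" where
  "moves_to rho m w \<longleftrightarrow> (\<exists>i<length rho. fst (rho ! i) = m \<and> snd (nxt rho i) = w)"

definition moves_below :: "(nat \<Rightarrow> nat \<Rightarrow> nat) \<Rightarrow> (nat \<times> nat) list \<Rightarrow> nat \<Rightarrow> nat \<Rightarrow> bool" where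
  "moves_below pm rho m w \<longleftrightarrow> (\<exists>i<length rho. fst (rho ! i) = m \<and>
      pm m (snd (rho ! i)) < pm m w \<and> pm m w < pm m (snd (nxt rho i)))"

definition moves_above :: "(nat \<Rightarrow> nat \<Rightarrow> nat) \<Rightarrow> (nat \<times> nat) list \<Rightarrow> nat \<Rightarrow> nat \<Rightarrow> bool" where
  "moves_above pw rho w m \<longleftrightarrow> (\<exists>i<length rho. snd (rho ! i) = w \<and>
      pw w (fst (prv rho i)) < pw w m \<and> pw w m < pw w (fst (rho ! i)))"

definition rot_edge :: "nat \<Rightarrow> (nat \<Rightarrow> nat \<Rightarrow> nat) \<Rightarrow> (nat \<Rightarrow> nat \<Rightarrow> nat)
    \<Rightarrow> (nat \<times> nat) list \<Rightarrow> (nat \<times> nat) list \<Rightarrow> bool" where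
  "rot_edge n pm pw rho' rho \<longleftrightarrow> is_rotation n pm pw rho' \<and> is_rotation n pm pw rho \<and>
     ((\<exists>m w. (m, w) \<in> set rho \<and> moves_to rho' m w) \<or>
      (\<exists>m w. (m, w) \<notin> set rho \<and> set rho' \<noteq> set rho \<and>
             moves_above pw rho' w m \<and> moves_below pm rho m w))"

definition agent_minranks :: "nat \<Rightarrow> (nat \<Rightarrow> nat \<Rightarrow> nat) \<Rightarrow> (nat \<Rightarrow> nat \<Rightarrow> nat) \<Rightarrow> (nat \<times> nat) list \<Rightarrow> nat set" where
  "agent_minranks n pm pw rho =
     (\<lambda>p. minrank_man n pw (fst p)) ` set rho \<union> (\<lambda>p. minrank_woman n pm (snd p)) ` set rho"

definition ext :: "nat \<Rightarrow> (nat \<Rightarrow> nat \<Rightarrow> nat) \<Rightarrow> (nat \<Rightarrow> nat \<Rightarrow> nat) \<Rightarrow> nat \<Rightarrow> (nat \<times> nat) list \<Rightarrow> int set" where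
  "ext n pm pw k rho =
     {int (Min (agent_minranks n pm pw rho)) - 2 * int k + 1 ..
      int (Max (agent_minranks n pm pw rho)) + 2 * int k - 1}"

end

theory Submission
  imports Defs
begin

lemma card_le_bij:
  assumes "bij_betw h {..<n} {1..(n::nat)}"
  shows "card {x\<in>{..<n}. h x \<le> c} \<le> c"
proof -
  have inj: "inj_on h {x\<in>{..<n}. h x \<le> c}"
    using assms unfolding bij_betw_def by (auto intro: inj_on_subset)
  have "h ` {x\<in>{..<n}. h x \<le> c} \<subseteq> {1..c}"
    using assms unfolding bij_betw_def by auto
  then have "card (h ` {x\<in>{..<n}. h x \<le> c}) \<le> c"
    by (metis card_atLeastAtMost card_mono diff_Suc_1 finite_atLeastAtMost)
  then show ?thesis using card_image[OF inj] by simp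
qed

lemma card_eq_bij:
  assumes "bij_betw h {..<n} {1..(n::nat)}" and "c \<le> n"
  shows "card {x\<in>{..<n}. h x \<le> c} = c"
proof -
  have inj: "inj_on h {x\<in>{..<n}. h x \<le> c}"
    using assms unfolding bij_betw_def by (auto intro: inj_on_subset)
  have "h ` {x\<in>{..<n}. h x \<le> c} = {1..c}"
  proof
    show "h ` {x\<in>{..<n}. h x \<le> c} \<subseteq> {1..c}"
      using assms unfolding bij_betw_def by auto
    show "{1..c} \<subseteq> h ` {x\<in>{..<n}. h x \<le> c}"
    proof
      fix v assume v: "v \<in> {1..c}"
      then have "v \<in> {1..n}" using assms(2) by auto
      then obtain x where "x \<in> {..<n}" "h x = v" using assms(1) unfolding bij_betw_def by (metis imageE)
      then show "v \<in> h ` {x\<in>{..<n}. h x \<le> c}" using v by auto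
    qed
  qed
  then show ?thesis using card_image[OF inj] by simp
qed

lemma stable_pair_bound:
  fixes P Q :: "nat \<Rightarrow> nat \<Rightarrow> nat" and f g rP rQ :: "nat \<Rightarrow> nat"
  assumes bP: "\<forall>x<n. bij_betw (P x) {..<n} {1..n}"
  and bQ: "\<forall>y<n. bij_betw (Q y) {..<n} {1..n}"
  and rPl: "\<forall>x<n. \<forall>y<n. rP y \<le> P x y"
  and rQl: "\<forall>x<n. \<forall>y<n. rQ x \<le> Q y x"
  and rQu: "\<forall>x<n. \<forall>y<n. int (Q y x) \<le> int (rQ x) + int k - 1"
  and fg: "\<forall>x<n. f x < n \<and> g (f x) = x" and gf: "\<forall>y<n. g y < n \<and> f (g y) = y"
  and st: "\<forall>x<n. \<forall>y<n. \<not> (P x y < P x (f x) \<and> Q y x < Q y (g y))"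
  and x0: "x0 < n" and k1: "k \<ge> 1"
  shows "int (rP (f x0)) \<le> int (rQ x0) + 3 * int k - 2"
proof -
  define y0 where "y0 = f x0"
  define a where "a = rP y0"
  define b where "b = rQ x0"
  have y0n: "y0 < n" using fg x0 y0_def by auto
  have "P x0 y0 \<in> {1..n}" using bP x0 y0n unfolding bij_betw_def by blast
  then have an: "a \<le> n" using rPl x0 y0n a_def by force
  define S where "S = {y\<in>{..<n}. P x0 y \<le> a - k}"
  define T where "T = {x\<in>{..<n}. Q y0 x \<le> b + 2*k - 2}"
  have cS: "card S = a - k" unfolding S_def using card_eq_bij bP x0 an by simp
  have cT: "card T \<le> b + 2*k - 2" unfolding T_def using card_le_bij bQ y0n by simp
  have sub: "g ` S \<subseteq> T"
  proof
    fix z assume "z \<in> g ` S"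
    then obtain y where y: "y \<in> S" "z = g y" by auto
    have yn: "y < n" using y S_def by auto
    have "P x0 y \<in> {1..n}" using bP x0 yn unfolding bij_betw_def by blast
    then have "P x0 y \<ge> 1" by simp
    then have "P x0 y < a" using y S_def k1 by auto
    also have "a \<le> P x0 y0" using rPl x0 y0n a_def by auto
    finally have "P x0 y < P x0 (f x0)" using y0_def by simp
    then have q1: "Q y (g y) \<le> Q y x0" using st x0 yn by force
    have q2: "int (Q y x0) \<le> int b + int k - 1" using rQu x0 yn b_def by auto
    have gy: "g y < n" using gf yn by auto
    have q3: "rQ (g y) \<le> Q y (g y)" using rQl gy yn by auto
    have q4: "int (Q y0 (g y)) \<le> int (rQ (g y)) + int k - 1" using rQu gy y0n by auto
    from q1 q2 q3 q4 have "int (Q y0 (g y)) \<le> int b + 2 * int k - 2" by linarith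
    then show "z \<in> T" unfolding T_def using y gy k1 by simp
  qed
  have "inj_on g S"
  proof (rule inj_onI)
    fix u v assume "u \<in> S" "v \<in> S" "g u = g v"
    then show "u = v" using gf unfolding S_def by (metis lessThan_iff mem_Collect_eq)
  qed
  moreover have "finite T" unfolding T_def by simp
  ultimately have "card S \<le> card T" using sub card_inj_on_le by blast
  then have "a - k \<le> b + 2*k - 2" using cS cT by simp
  then have "a + 2 \<le> b + 3*k" using k1 by arith
  then have "int a + 2 \<le> int b + 3 * int k" by linarith
  then show ?thesis using a_def b_def y0_def by simp
qed


lemma stable_props:
  assumes st: "stable n pm pw mu"
  shows "\<forall>x<n. mu x < n \<and> inv_into {..<n} mu (mu x) = x"
    and "\<forall>y<n. inv_into {..<n} mu y < n \<and> mu (inv_into {..<n} mu y) = y"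
    and "\<forall>x<n. \<forall>y<n. prefers_to_partner n pw mu y x \<longleftrightarrow> pw y x < pw y (inv_into {..<n} mu y)"
    and "\<forall>x<n. \<forall>y<n. \<not> (pm x y < pm x (mu x) \<and> pw y x < pw y (inv_into {..<n} mu y))"
proof -
  have b: "bij_betw mu {..<n} {..<n}" using st unfolding stable_def is_matching_def by auto
  show A: "\<forall>x<n. mu x < n \<and> inv_into {..<n} mu (mu x) = x"
    using b bij_betw_inv_into_left[OF b] unfolding bij_betw_def by auto
  show B: "\<forall>y<n. inv_into {..<n} mu y < n \<and> mu (inv_into {..<n} mu y) = y"
    using bij_betw_inv_into_right[OF b] bij_betw_apply[OF bij_betw_inv_into[OF b]] by auto
  show C: "\<forall>x<n. \<forall>y<n. prefers_to_partner n pw mu y x \<longleftrightarrow> pw y x < pw y (inv_into {..<n} mu y)"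
  proof (intro allI impI)
    fix x y assume "x < n" "y < n"
    have "\<forall>m'<n. mu m' = y \<longrightarrow> m' = inv_into {..<n} mu y" using A by metis
    then show "prefers_to_partner n pw mu y x \<longleftrightarrow> pw y x < pw y (inv_into {..<n} mu y)"
      unfolding prefers_to_partner_def using B \<open>y < n\<close> by metis
  qed
  show "\<forall>x<n. \<forall>y<n. \<not> (pm x y < pm x (mu x) \<and> pw y x < pw y (inv_into {..<n} mu y))"
    using st C unfolding stable_def by blast
qed

lemma rot_facts:
  assumes "is_rotation_of n pm pw mu rho" "i < length rho"
  shows "fst (rho!i) < n" "snd (rho!i) < n" "mu (fst (rho!i)) = snd (rho!i)"
    "\<forall>w<n. pm (fst (rho!i)) (snd (rho!i)) < pm (fst (rho!i)) w \<and> pm (fst (rho!i)) w < pm (fst (rho!i)) (snd (nxt rho i)) \<longrightarrow>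
                   \<not> prefers_to_partner n pw mu w (fst (rho!i))"
    "stable n pm pw mu"
  using assms unfolding is_rotation_of_def Let_def by auto

lemma minman_le: "m < n \<Longrightarrow> w < n \<Longrightarrow> minrank_man n pw m \<le> pw w m"
  unfolding minrank_man_def by (rule Min_le) auto
lemma minwoman_le: "w < n \<Longrightarrow> m < n \<Longrightarrow> minrank_woman n pm w \<le> pm m w"
  unfolding minrank_woman_def by (rule Min_le) auto

lemma man_upper:
  assumes "k_range n pm pw k" "m < n" "w < n"
  shows "int (pw w m) \<le> int (minrank_man n pw m) + int k - 1"
proof -
  have "pw w m \<le> maxrank_man n pw m" unfolding maxrank_man_def by (rule Max_ge) (use assms in auto)
  then show ?thesis using assms unfolding k_range_def by force
qed
lemma woman_upper:
  assumes "k_range n pm pw k" "w < n" "m < n"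
  shows "int (pm m w) \<le> int (minrank_woman n pm w) + int k - 1"
proof -
  have "pm m w \<le> maxrank_woman n pm w" unfolding maxrank_woman_def by (rule Max_ge) (use assms in auto)
  then show ?thesis using assms unfolding k_range_def by force
qed

lemma minman_range:
  assumes "sm_instance n pm pw" "m < n"
  shows "1 \<le> minrank_man n pw m \<and> minrank_man n pw m \<le> n"
proof -
  have ne: "(\<lambda>w. pw w m) ` {..<n} \<noteq> {}" using assms by auto
  have "minrank_man n pw m \<in> (\<lambda>w. pw w m) ` {..<n}" unfolding minrank_man_def
    using Min_in[OF _ ne] by auto
  then obtain w where w: "w < n" "minrank_man n pw m = pw w m" by auto
  have "bij_betw (pw w) {..<n} {1..n}" using assms w unfolding sm_instance_def pref_complete_def by auto
  then have "pw w m \<in> {1..n}" using assms(2) unfolding bij_betw_def by blast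
  then show ?thesis using w by auto
qed
lemma minwoman_range:
  assumes "sm_instance n pm pw" "w < n"
  shows "1 \<le> minrank_woman n pm w \<and> minrank_woman n pm w \<le> n"
proof -
  have ne: "(\<lambda>m. pm m w) ` {..<n} \<noteq> {}" using assms by auto
  have "minrank_woman n pm w \<in> (\<lambda>m. pm m w) ` {..<n}" unfolding minrank_woman_def
    using Min_in[OF _ ne] by auto
  then obtain m where m: "m < n" "minrank_woman n pm w = pm m w" by auto
  have "bij_betw (pm m) {..<n} {1..n}" using assms m unfolding sm_instance_def pref_complete_def by auto
  then have "pm m w \<in> {1..n}" using assms(2) unfolding bij_betw_def by blast
  then show ?thesis using m by auto
qed

lemma k_pos:
  assumes "k_range n pm pw k" "0 < n"
  shows "1 \<le> k"
proof -
  have "pw 0 0 \<le> maxrank_man n pw 0" unfolding maxrank_man_def by (rule Max_ge) (use assms in auto)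
  moreover have "minrank_man n pw 0 \<le> pw 0 0" using minman_le assms by auto
  ultimately show ?thesis using assms unfolding k_range_def by force
qed

lemma pick:
  assumes "x \<in> agent_minranks n pm pw rho" "y \<in> agent_minranks n pm pw sigma"
    "1 \<le> x" "x \<le> n" "1 \<le> y" "y \<le> n" "int x \<le> int y + 4 * int k - 2" "int y \<le> int x + 4 * int k - 2"
    "1 \<le> k"
  shows "\<exists>i::int. i \<in> {1..int n} \<and> i \<in> ext n pm pw k rho \<inter> ext n pm pw k sigma"
proof -
  have f: "finite (agent_minranks n pm pw r)" for r unfolding agent_minranks_def by auto
  have x1: "Min (agent_minranks n pm pw rho) \<le> x" "x \<le> Max (agent_minranks n pm pw rho)"
    using assms(1) f by auto
  have y1: "Min (agent_minranks n pm pw sigma) \<le> y" "y \<le> Max (agent_minranks n pm pw sigma)"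
    using assms(2) f by auto
  define i where "i = max (min (int x) (int y)) (max (int x) (int y) - 2 * int k + 1)"
  have "i \<in> {1..int n}" using assms unfolding i_def by auto
  moreover have "i \<in> ext n pm pw k rho" unfolding ext_def i_def using x1 assms by auto
  moreover have "i \<in> ext n pm pw k sigma" unfolding ext_def i_def using y1 assms by auto
  ultimately show ?thesis by blast
qed

lemma in_agents:
  assumes "i < length rho"
  shows "minrank_man n pw (fst (rho!i)) \<in> agent_minranks n pm pw rho"
    "minrank_woman n pm (snd (rho!i)) \<in> agent_minranks n pm pw rho"
  using assms unfolding agent_minranks_def by auto


theorem lemma7p8:
  fixes n k :: nat and pm pw :: "nat \<Rightarrow> nat \<Rightarrow> nat" and rho sigma :: "(nat \<times> nat) list"
  assumes "sm_instance n pm pw"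
    and "k_range n pm pw k"
    and "rot_edge n pm pw rho sigma"
  shows "\<exists>i::int. i \<in> {1..int n} \<and> i \<in> ext n pm pw k rho \<inter> ext n pm pw k sigma"
proof -
  note sm = assms(1) and kr = assms(2)
  obtain mu where R: "is_rotation_of n pm pw mu rho"
    using assms(3) unfolding rot_edge_def is_rotation_def by auto
  obtain mu' where S: "is_rotation_of n pm pw mu' sigma"
    using assms(3) unfolding rot_edge_def is_rotation_def by auto
  have "rho \<noteq> []" using R unfolding is_rotation_of_def by auto
  then have "0 < n" using rot_facts(1)[OF R, of 0] by auto
  then have k1: "1 \<le> k" using k_pos kr by auto
  have bpm: "\<forall>x<n. bij_betw (pm x) {..<n} {1..n}" and bpw: "\<forall>x<n. bij_betw (pw x) {..<n} {1..n}"
    using sm unfolding sm_instance_def pref_complete_def by auto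
  have rw: "\<forall>x<n. \<forall>y<n. minrank_woman n pm y \<le> pm x y" using minwoman_le by blast
  have rm: "\<forall>x<n. \<forall>y<n. minrank_man n pw x \<le> pw y x" using minman_le by blast
  have uw: "\<forall>x<n. \<forall>y<n. int (pm y x) \<le> int (minrank_woman n pm x) + int k - 1"
    using woman_upper[OF kr] by blast
  have um: "\<forall>x<n. \<forall>y<n. int (pw y x) \<le> int (minrank_man n pw x) + int k - 1"
    using man_upper[OF kr] by blast
  from assms(3) consider
    (r1) m w where "(m, w) \<in> set sigma" "moves_to rho m w"
  | (r2) m w where "moves_above pw rho w m" "moves_below pm sigma m w"
    unfolding rot_edge_def by blast
  then show ?thesis
  proof cases
    case r1
    then obtain i where i: "i < length rho" "fst (rho!i) = m" unfolding moves_to_def by auto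
    have mn: "m < n" using rot_facts(1)[OF R i(1)] i by simp
    have a: "minrank_man n pw m \<in> agent_minranks n pm pw rho" using in_agents(1)[OF i(1)] i by simp
    have b: "minrank_man n pw m \<in> agent_minranks n pm pw sigma"
      using r1(1) unfolding agent_minranks_def by force
    show ?thesis using pick[OF a b] minman_range[OF sm mn] k1 by auto
  next
    case r2
    obtain i where i: "i < length rho" "snd (rho!i) = w"
      "pw w (fst (prv rho i)) < pw w m" "pw w m < pw w (fst (rho!i))"
      using r2(1) unfolding moves_above_def by auto
    obtain j where j: "j < length sigma" "fst (sigma!j) = m"
      "pm m (snd (sigma!j)) < pm m w" "pm m w < pm m (snd (nxt sigma j))"
      using r2(2) unfolding moves_below_def by auto
    define mi where "mi = fst (rho!i)"
    have wn: "w < n" using rot_facts(2)[OF R i(1)] i by simp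
    have mn: "m < n" using rot_facts(1)[OF S j(1)] j by simp
    have min: "mi < n" using rot_facts(1)[OF R i(1)] mi_def by simp
    have mumi: "mu mi = w" using rot_facts(3)[OF R i(1)] i mi_def by simp
    have stmu: "stable n pm pw mu" using rot_facts(5)[OF R i(1)] .
    have stmu': "stable n pm pw mu'" using rot_facts(5)[OF S j(1)] .
    define g where "g = inv_into {..<n} mu"
    define g' where "g' = inv_into {..<n} mu'"
    note P = stable_props[OF stmu, folded g_def]
    note P' = stable_props[OF stmu', folded g'_def]
    have np: "\<not> prefers_to_partner n pw mu' w m"
      using rot_facts(4)[OF S j(1)] j wn by auto
    define m' where "m' = g' w"
    have m'n: "m' < n" and mu'm': "mu' m' = w" using P'(2) wn m'_def by auto
    have A1: "pw w m' \<le> pw w m" using np P'(3) wn mn m'_def by force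
    have A2: "int (minrank_woman n pm (mu' m')) \<le> int (minrank_man n pw m') + 3 * int k - 2"
      by (rule stable_pair_bound[where P=pm and Q=pw and f=mu' and g=g']) (use bpm bpw rw rm um P'(1) P'(2) P'(4) m'n k1 in auto)
    have A3: "minrank_man n pw m' \<le> pw w m'" using minman_le m'n wn by auto
    have A4: "int (pw w m) \<le> int (minrank_man n pw m) + int k - 1" using um mn wn by auto
    have dA: "int (minrank_woman n pm w) \<le> int (minrank_man n pw m) + 4 * int k - 2"
      using A1 A2[unfolded mu'm'] A3 A4 by linarith
    have gw: "g w = mi" using P(1) min mumi by auto
    have "pw w m < pw w (g w)" using i(4) gw mi_def by simp
    then have "\<not> (pm m w < pm m (mu m))" using P(4) mn wn by blast
    then have B1: "pm m (mu m) \<le> pm m w" by simp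
    have mumn: "mu m < n" using P(1) mn by auto
    have B2: "int (minrank_man n pw (g (mu m))) \<le> int (minrank_woman n pm (mu m)) + 3 * int k - 2"
      by (rule stable_pair_bound[where P=pw and Q=pm and f=g and g=mu]) (use bpm bpw rw rm uw P(1) P(2) P(4) mumn k1 in auto)
    have B3: "minrank_woman n pm (mu m) \<le> pm m (mu m)" using minwoman_le mumn mn by auto
    have B4: "int (pm m w) \<le> int (minrank_woman n pm w) + int k - 1" using uw mn wn by auto
    have gmu: "g (mu m) = m" using P(1) mn by auto
    have dB: "int (minrank_man n pw m) \<le> int (minrank_woman n pm w) + 4 * int k - 2"
      using B1 B2[unfolded gmu] B3 B4 by linarith
    have a: "minrank_woman n pm w \<in> agent_minranks n pm pw rho" using in_agents(2)[OF i(1)] i by simp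
    have b: "minrank_man n pw m \<in> agent_minranks n pm pw sigma" using in_agents(1)[OF j(1)] j by simp
    show ?thesis using pick[OF a b] minman_range[OF sm mn] minwoman_range[OF sm wn] k1 dA dB by auto
  qed
qed

end
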